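(* Let $n\ge1$ and let $(\xi_i,\mathcal{F}_i)_{i=0,\dots,n}$ be a sequence of real-valued martingale differences on $(\Omega,\mathcal{F},\mathbf{P})$ with $\xi_0=0$, $\{\emptyset,\Omega\}=\mathcal{F}_0\subseteq\cdots\subseteq\mathcal{F}_n\subseteq\mathcal{F}$ and $\mathbf{E}[\xi_i\mid\mathcal{F}_{i-1}]=0$. Let $S_k=\sum_{i=1}^k\xi_i$ and $\langle S\rangle_k=\sum_{i=1}^k\mathbf{E}[\xi_i^2\mid\mathcal{F}_{i-1}]$. Let $p\ge2$ and assume $\mathbf{E}[|\xi_i|^p]<\infty$ for all $i\in[1,n]$. Define $\Xi(S)_k=\sum_{i=1}^k\mathbf{E}[(\xi_i^+)^p\mid\mathcal{F}_{i-1}]$ for $k\in[1,n]$, and set $a=\frac{2}{p+2}$, $b=1-a$. Then for all $x,y,v,w>0$, $$\mathbf{P}\big(S_k\ge x,\ \langle S\rangle_k\le v \text{ and } \Xi(S)_k\le w \text{ for some } k\in[1,n]\big)\le \exp\Big\{-\frac{a^2x^2}{2e^pv}\Big\}+\exp\Big\{-\frac{bx}{y}\log\Big(1+\frac{bxy^{p-1}}{w}\Big)\Big\}+\mathbf{P}\Big(\max_{1\le i\le n}\xi_i>y\Big).$$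
   Context: $x^+=\max\{x,0\}$. (The paper denotes the constants $a,b$ by $\alpha,\beta$.) *)

theory Defs
  imports "HOL-Probability.Probability"
begin

definition mart_sum :: "(nat \<Rightarrow> 'a \<Rightarrow> real) \<Rightarrow> nat \<Rightarrow> 'a \<Rightarrow> real" where
  "mart_sum \<xi> k \<omega> = (\<Sum>i=1..k. \<xi> i \<omega>)"

definition cond_qv :: "'a measure \<Rightarrow> (nat \<Rightarrow> 'a measure) \<Rightarrow> (nat \<Rightarrow> 'a \<Rightarrow> real) \<Rightarrow> nat \<Rightarrow> 'a \<Rightarrow> real" where
  "cond_qv M F \<xi> k \<omega> = (\<Sum>i=1..k. real_cond_exp M (F (i - 1)) (\<lambda>\<eta>. (\<xi> i \<eta>)\<^sup>2) \<omega>)"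

definition cond_pos_moment :: "'a measure \<Rightarrow> (nat \<Rightarrow> 'a measure) \<Rightarrow> real \<Rightarrow> (nat \<Rightarrow> 'a \<Rightarrow> real) \<Rightarrow> nat \<Rightarrow> 'a \<Rightarrow> real" where
  "cond_pos_moment M F p \<xi> k \<omega> = (\<Sum>i=1..k. real_cond_exp M (F (i - 1)) (\<lambda>\<eta>. (max (\<xi> i \<eta>) 0) powr p) \<omega>)"

end

theory Submission
  imports Defs
begin


lemma L1:
  fixes r p :: real assumes "r \<le> p" "0 \<le> p"
  shows "exp r - 1 - r \<le> r\<^sup>2 * exp p / 2"
proof (cases "r < 0")
  case True
  obtain t where t: "r < t" "t < 0" "exp r = (\<Sum>m<2. exp 0 / fact m * r ^ m) + exp t / fact 2 * r ^ 2"
    using Maclaurin_minus[of r 2 "\<lambda>_. exp" exp] True by auto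
  have "exp t \<le> exp p" using t assms by simp
  moreover have "exp r - 1 - r = exp t * r\<^sup>2 / 2" using t(3) by (simp add: numeral_2_eq_2)
  ultimately have "exp t * r\<^sup>2 \<le> exp p * r\<^sup>2" by (intro mult_right_mono) auto
  then show ?thesis using \<open>exp r - 1 - r = exp t * r\<^sup>2 / 2\<close> by (simp add: mult.commute)
next
  case False
  obtain t where t: "\<bar>t\<bar> \<le> \<bar>r\<bar>" "exp r = (\<Sum>m<2. r ^ m / fact m) + exp t / fact 2 * r ^ 2"
    using Maclaurin_exp_le[of r 2] by auto
  have "t \<le> p" using t False assms by linarith
  then have "exp t \<le> exp p" by simp
  moreover have "exp r - 1 - r = exp t * r\<^sup>2 / 2" using t(2) by (simp add: numeral_2_eq_2)
  ultimately have "exp t * r\<^sup>2 \<le> exp p * r\<^sup>2" by (intro mult_right_mono) auto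
  then show ?thesis using \<open>exp r - 1 - r = exp t * r\<^sup>2 / 2\<close> by (simp add: mult.commute)
qed

lemma L2:
  fixes r s p :: real assumes "p \<le> r" "r \<le> s" "0 < p"
  shows "(exp r - 1 - r) * s powr p \<le> (exp s - 1 - s) * r powr p"
proof -
  define g where "g z = ln (exp z - 1 - z) - p * ln z" for z
  have pos: "exp z - 1 - z > 0" if "z > 0" for z :: real
  proof -
    have "z\<^sup>2 > 0" using that by simp
    then show ?thesis using exp_lower_Taylor_quadratic[of z] that by linarith
  qed
  have "g r \<le> g s"
  proof (rule DERIV_nonneg_imp_increasing_open[OF assms(2)])
    fix z assume z: "r < z" "z < s"
    have zp: "z > 0" "z \<ge> p" using z assms by auto
    have d: "DERIV g z :> (exp z - 1) / (exp z - 1 - z) - p / z"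
      unfolding g_def using pos[OF zp(1)] zp
      by (auto intro!: derivative_eq_intros simp: field_simps)
    have "p / z \<le> (exp z - 1) / (exp z - 1 - z)"
    proof -
      have "p * (exp z - 1 - z) \<le> z * (exp z - 1)"
      proof -
        have "p * (exp z - 1 - z) \<le> p * (exp z - 1)" using zp assms by auto
        also have "\<dots> \<le> z * (exp z - 1)" using zp by (intro mult_right_mono) (auto simp: )
        finally show ?thesis .
      qed
      then show ?thesis using pos[OF zp(1)] zp by (simp add: divide_simps mult.commute)
    qed
    then show "\<exists>y. DERIV g z :> y \<and> 0 \<le> y" using d by auto
  next
    have "\<forall>z\<in>{r..s}. isCont g z"
    proof
      fix z assume z: "z \<in> {r..s}"
      then have "z > 0" using assms by auto
      then show "isCont g z" using pos[of z] unfolding g_def by (auto intro!: continuous_intros)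
    qed
    then show "continuous_on {r..s} g" by (simp add: continuous_at_imp_continuous_on)
  qed
  then have "ln (exp r - 1 - r) + p * ln s \<le> ln (exp s - 1 - s) + p * ln r"
    unfolding g_def by linarith
  then have "exp (ln (exp r - 1 - r) + p * ln s) \<le> exp (ln (exp s - 1 - s) + p * ln r)" by simp
  moreover have "r > 0" "s > 0" using assms by auto
  ultimately show ?thesis using pos[of r] pos[of s]
    by (simp add: exp_add powr_def mult.commute)
qed




lemma PW1:
  fixes t y l p :: real assumes "y > 0" "l > 0" "t \<le> y" "p \<ge> 2"
  shows "exp (l * t) \<le> 1 + l * t + (l\<^sup>2 * exp p / 2) * t\<^sup>2
            + ((exp (l * y) - 1 - l * y) / y powr p) * (max t 0) powr p"
proof -
  have nn: "exp z - 1 - z \<ge> 0" for z :: real using exp_ge_add_one_self[of z] by linarith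
  have B0: "((exp (l * y) - 1 - l * y) / y powr p) * (max t 0) powr p \<ge> 0"
    using nn[of "l*y"] by simp
  show ?thesis
  proof (cases "l * t \<le> p")
    case True
    have "exp (l*t) - 1 - l*t \<le> (l*t)\<^sup>2 * exp p / 2" using L1[OF True] assms by simp
    also have "\<dots> = (l\<^sup>2 * exp p / 2) * t\<^sup>2" by (simp add: power_mult_distrib)
    finally show ?thesis using B0 by linarith
  next
    case False
    have "l * t > 0" using False assms by linarith
    then have tpos: "t > 0" using assms(2) by (simp add: zero_less_mult_iff)
    have "l*t \<le> l*y" using assms by simp
    from L2[of p "l*t" "l*y"] False this assms
    have "(exp (l*t) - 1 - l*t) * (l*y) powr p \<le> (exp (l*y) - 1 - l*y) * (l*t) powr p" by simp
    then have "(exp (l*t) - 1 - l*t) * (l powr p * y powr p) \<le> (exp (l*y) - 1 - l*y) * (l powr p * t powr p)"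
      using assms tpos by (simp add: powr_mult)
    then have "(exp (l*t) - 1 - l*t) * y powr p \<le> (exp (l*y) - 1 - l*y) * t powr p"
    proof -
      have "l powr p * ((exp (l*t) - 1 - l*t) * y powr p) \<le> l powr p * ((exp (l*y) - 1 - l*y) * t powr p)"
        using \<open>(exp (l*t) - 1 - l*t) * (l powr p * y powr p) \<le> (exp (l*y) - 1 - l*y) * (l powr p * t powr p)\<close>
        by (simp add: algebra_simps)
      moreover have "l powr p > 0" using assms by simp
      ultimately show ?thesis by simp
    qed
    then have "exp (l*t) - 1 - l*t \<le> ((exp (l * y) - 1 - l * y) / y powr p) * t powr p"
      using assms by (simp add: divide_simps mult.commute)
    moreover have "(l\<^sup>2 * exp p / 2) * t\<^sup>2 \<ge> 0" by simp
    moreover have "((exp (l * y) - 1 - l * y) / y powr p) * (max t 0) powr p = ((exp (l * y) - 1 - l * y) / y powr p) * t powr p" using tpos by simp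
    ultimately show ?thesis by linarith
  qed
qed

lemma PW2:
  fixes t y p :: real assumes "y > 0" "t \<le> y" "p \<ge> 2"
  shows "(max t 0) powr p \<le> y powr (p - 2) * t\<^sup>2"
proof (cases "t > 0")
  case True
  have "t powr p = t powr ((p - 2) + 2)" by simp
  also have "\<dots> = t powr (p - 2) * t powr 2" by (rule powr_add)
  also have "\<dots> = t powr (p - 2) * t\<^sup>2" using True by (simp add: powr_numeral)
  also have "\<dots> \<le> y powr (p - 2) * t\<^sup>2" using True assms
    by (intro mult_right_mono powr_mono2) auto
  finally show ?thesis using True by simp
next
  case False then show ?thesis by simp
qed

lemma analytic:
  fixes p X V W :: real
  assumes p: "p \<ge> 2" and X: "X > 0" and V: "V > 0" and W: "W > 0"
  shows "\<exists>s>0. exp (- s * X + s\<^sup>2 * V * exp p / 2 + min W V * (exp s - 1 - s))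
     \<le> exp (- ((2 / (p + 2))\<^sup>2 * X\<^sup>2 / (2 * exp p * V)))
       + exp (- ((1 - 2 / (p + 2)) * X) * ln (1 + (1 - 2 / (p + 2)) * X / W))"
proof -
  define K where "K = exp p"
  define a where "a = 2 / (p + 2)"
  define b where "b = 1 - a"
  define b' where "b' = 1 - a / 2"
  define \<omega> where "\<omega> = min W V"
  define e1 where "e1 = - (a\<^sup>2 * X\<^sup>2 / (2 * K * V))"
  define e2 where "e2 = - (b * X) * ln (1 + b * X / W)"
  define F where "F s = - s * X + s\<^sup>2 * V * K / 2 + \<omega> * (exp s - 1 - s)" for s
  have K: "K > 0" unfolding K_def by simp
  have a: "a > 0" "a \<le> 1/2" using p unfolding a_def by (auto simp: field_simps)
  have b: "b \<ge> 1/2" "b < 1" "b = p / (p+2)" using a p unfolding b_def a_def by (auto simp: field_simps)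
  have b': "b' = (p+1)/(p+2)" "b' \<le> 1" "b \<le> b'" using p a unfolding b'_def a_def b_def by (auto simp: field_simps)
  have om: "\<omega> > 0" "\<omega> \<le> V" "\<omega> \<le> W" using V W unfolding \<omega>_def by auto
  have nn: "exp z - 1 - z \<ge> 0" for z :: real using exp_ge_add_one_self[of z] by linarith
  have key: "\<exists>s>0. F s \<le> max e1 e2"
  proof -
    define s1 where "s1 = a * X / (K * V)"
    have s1: "s1 > 0" using a X K V unfolding s1_def by simp
    have s1V: "s1 * V * K = a * X" using K V unfolding s1_def by simp
    have Fs1: "F s1 = e1 + (- s1 * b * X + \<omega> * (exp s1 - 1 - s1))"
      unfolding F_def e1_def b_def s1_def using K V by (simp add: field_simps power2_eq_square)
    show ?thesis
    proof (cases "s1 \<le> p")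
      case True
      have "\<omega> * (exp s1 - 1 - s1) \<le> V * (s1\<^sup>2 * K / 2)"
        using L1[OF True] p om nn[of s1] unfolding K_def
        by (intro mult_mono) auto
      also have "\<dots> = s1 * (a * X) / 2" using s1V by (simp add: power2_eq_square field_simps)
      also have "\<dots> = (a/2) * (s1 * X)" by simp
      also have "\<dots> \<le> b * (s1 * X)" using s1 X a b by (intro mult_right_mono) auto
      also have "\<dots> = s1 * b * X" by simp
      finally have "F s1 \<le> e1" using Fs1 by linarith
      then show ?thesis using s1 by (intro exI[of _ s1]) auto
    next
      case False
      define ss where "ss = ln (1 + b' * X / \<omega>)"
      have "b' > 0" using b' b by linarith
      then have bX: "b' * X / \<omega> > 0" using X om by simp
      have ess: "exp ss = 1 + b' * X / \<omega>" unfolding ss_def using bX by simp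
      show ?thesis
      proof (cases "s1 < ss")
        case True
        have "exp s1 - 1 \<le> exp ss - 1" using True by simp
        then have "\<omega> * (exp s1 - 1 - s1) \<le> \<omega> * (exp ss - 1)" using om s1
        proof -
          have "exp s1 - 1 - s1 \<le> exp ss - 1" using \<open>exp s1 - 1 \<le> exp ss - 1\<close> s1 by linarith
          then show ?thesis using om by (intro mult_left_mono) auto
        qed
        also have "\<dots> = b' * X" using ess om by simp
        also have "\<dots> \<le> s1 * b * X"
        proof -
          have "s1 * b \<ge> p * b" using False b(1) by (intro mult_right_mono) auto
          moreover have "p * b \<ge> 2 * (1/2)" using p b(1) by (intro mult_mono) auto
          ultimately have "b' \<le> s1 * b" using b'(2) by linarith
          then have "b' * X \<le> (s1 * b) * X" using X by (intro mult_right_mono) auto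
          then show ?thesis by simp
        qed
        finally have "F s1 \<le> e1" using Fs1 by linarith
        then show ?thesis using s1 by (intro exI[of _ s1]) auto
      next
        case ssle: False
        have ss: "ss > 0" unfolding ss_def using bX by simp
        have "X / V > p * K / a" using False s1_def K V a
          by (simp add: field_simps)
        then have "X / \<omega> > p * K / a"
        proof -
          have "X / V \<le> X / \<omega>" using om X by (intro divide_left_mono) auto
          then show ?thesis using \<open>X / V > p * K / a\<close> by linarith
        qed
        then have "b' * (X / \<omega>) > b' * (p * K / a)" using \<open>b' > 0\<close>
          by (intro mult_strict_left_mono) auto
        then have g1: "b' * X / \<omega> > b' * (p * K / a)" by simp
        have g2: "b' * (p * K / a) = p * (p + 1) / 2 * K" unfolding b' a_def using p by (simp add: field_simps)
        have g3: "p * (p + 1) / 2 * K \<ge> 3 * K"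
        proof -
          have "p * (p + 1) \<ge> 2 * 3" using p by (intro mult_mono) auto
          then have "p * (p + 1) / 2 \<ge> 3" by simp
          then show ?thesis using K by (intro mult_right_mono) auto
        qed
        have "b' * X / \<omega> > 3 * K" using g1 g2 g3 by linarith
        moreover have "3 * K \<ge> exp (p + 1)"
        proof -
          have "exp (1::real) \<le> 3" by (rule exp_le)
          then have "exp p * exp 1 \<le> exp p * 3" by (intro mult_left_mono) auto
          then show ?thesis unfolding K_def exp_add by simp
        qed
        ultimately have "exp (p+1) < exp ss" using ess by simp
        then have ssp: "ss > p + 1" by simp
        have "F ss \<le> - ss * (b + a/2) * X + \<omega> * (exp ss - 1 - ss)"
        proof -
          have "ss\<^sup>2 * V * K / 2 \<le> ss * (s1 * V * K) / 2" using ssle ss V K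
            by (simp add: power2_eq_square mult_left_mono mult_right_mono)
          then have h: "ss\<^sup>2 * V * K / 2 \<le> ss * a * X / 2" using s1V by simp
          have "- ss * (b + a/2) * X = - ss * X + ss * a * X / 2" unfolding b_def by (simp add: algebra_simps)
          then show ?thesis unfolding F_def using h by linarith
        qed
        also have "\<dots> = - ss * b' * X + b' * X - \<omega> * ss" using ess om
          unfolding b'_def b_def by (simp add: field_simps)
        also have "\<dots> \<le> - b * X * ss"
        proof -
          have "ss * (a/2) = ss / (p + 2)" unfolding a_def using p by (simp add: field_simps)
          moreover have "(p + 1) / (p + 2) \<le> ss / (p + 2)" using ssp p by (intro divide_right_mono) auto
          ultimately have "b' \<le> ss * (a/2)" using b'(1) by linarith
          then have "b' * X \<le> ss * (a/2) * X" using X by (simp add: mult_right_mono)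
          moreover have "\<omega> * ss \<ge> 0" using om ss by simp
          ultimately show ?thesis unfolding b'_def b_def by (simp add: field_simps)
        qed
        also have "\<dots> \<le> e2"
        proof -
          have "ln (1 + b * X / W) \<le> ln (1 + b' * X / \<omega>)"
          proof -
            have "b * X \<le> b' * X" using b'(3) X by (intro mult_right_mono) auto
            have "b * X / W \<le> b * X / \<omega>" using om b(1) X by (intro divide_left_mono) auto
            also have "\<dots> \<le> b' * X / \<omega>" using \<open>b * X \<le> b' * X\<close> om by (intro divide_right_mono) auto
            finally have "b * X / W \<le> b' * X / \<omega>" .
            moreover have "b * X / W \<ge> 0" using b(1) X W by simp
            ultimately show ?thesis by simp
          qed
          then have "(b * X) * ln (1 + b * X / W) \<le> (b * X) * ss" unfolding ss_def
            using b(1) X by (intro mult_left_mono) auto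
          then show ?thesis unfolding e2_def by simp
        qed
        finally show ?thesis using ss by (intro exI[of _ ss]) auto
      qed
    qed
  qed
  then obtain s where s: "s > 0" "F s \<le> max e1 e2" by blast
  have "exp (F s) \<le> exp e1 + exp e2" using s(2)
  proof (cases "e1 \<le> e2")
    case True
    then have "exp (F s) \<le> exp e2" using s(2) by simp
    then show ?thesis using exp_gt_zero[of e1] by linarith
  next
    case False
    then have "exp (F s) \<le> exp e1" using s(2) by simp
    then show ?thesis using exp_gt_zero[of e2] by linarith
  qed
  then show ?thesis using s(1) unfolding F_def K_def \<omega>_def e1_def e2_def a_def b_def
    by (intro exI[of _ s]) (simp add: mult.commute mult.left_commute mult.assoc)
qed




lemma int_bmult:
  fixes f g :: "'a \<Rightarrow> real"
  assumes "integrable M f" "g \<in> borel_measurable M" "\<And>x. x \<in> space M \<Longrightarrow> \<bar>g x\<bar> \<le> C"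
  shows "integrable M (\<lambda>x. g x * f x)"
proof (rule Bochner_Integration.integrable_bound[where f="\<lambda>x. C * f x"])
  show "integrable M (\<lambda>x. C * f x)" using assms(1) by simp
  show "(\<lambda>x. g x * f x) \<in> borel_measurable M" using assms(1,2) by measurable
  show "AE x in M. norm (g x * f x) \<le> norm (C * f x)"
  proof (rule AE_I2)
    fix x assume x: "x \<in> space M"
    have "C \<ge> 0" using assms(3)[OF x] by linarith
    then show "norm (g x * f x) \<le> norm (C * f x)" using assms(3)[OF x]
      by (simp add: abs_mult mult_right_mono)
  qed
qed

locale fn_setting =
  fixes M :: "'a measure" and F :: "nat \<Rightarrow> 'a measure" and \<xi> :: "nat \<Rightarrow> 'a \<Rightarrow> real"
    and n :: nat and p y l \<alpha> \<beta> :: real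
  assumes prob: "prob_space M"
    and subalg: "\<And>i. i \<le> n \<Longrightarrow> subalgebra M (F i)"
    and filt: "\<And>i. i < n \<Longrightarrow> sets (F i) \<subseteq> sets (F (Suc i))"
    and meas: "\<And>i. i \<le> n \<Longrightarrow> \<xi> i \<in> borel_measurable (F i)"
    and int: "\<And>i. i \<in> {1..n} \<Longrightarrow> integrable M (\<xi> i)"
    and ce0: "\<And>i. i \<in> {1..n} \<Longrightarrow> AE \<omega> in M. real_cond_exp M (F (i - 1)) (\<xi> i) \<omega> = 0"
    and p: "p \<ge> 2"
    and intp: "\<And>i. i \<in> {1..n} \<Longrightarrow> integrable M (\<lambda>\<omega>. \<bar>\<xi> i \<omega>\<bar> powr p)"
    and y: "y > 0" and l: "l > 0" and \<alpha>: "\<alpha> \<ge> 0" and \<beta>: "\<beta> \<ge> 0"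
    and PB: "\<And>t. t \<le> y \<Longrightarrow> exp (l * t) \<le> 1 + l * t + \<alpha> * t\<^sup>2 + \<beta> * (max t 0) powr p"
begin

interpretation prob_space M by (rule prob)

definition CE :: "nat \<Rightarrow> ('a \<Rightarrow> real) \<Rightarrow> 'a \<Rightarrow> real" where
  "CE i f = real_cond_exp M (F (i - 1)) f"
definition q where "q i \<omega> = max 0 (CE i (\<lambda>\<eta>. (\<xi> i \<eta>)\<^sup>2) \<omega>)"
definition r where "r i \<omega> = max 0 (CE i (\<lambda>\<eta>. (max (\<xi> i \<eta>) 0) powr p) \<omega>)"
definition \<eta> where "\<eta> i \<omega> = min (\<xi> i \<omega>) y"
definition Z where "Z k \<omega> = exp (l * (\<Sum>i=1..k. \<eta> i \<omega>) - (\<Sum>i=1..k. \<alpha> * q i \<omega> + \<beta> * r i \<omega>))"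

lemma sets_mono: "i \<le> j \<Longrightarrow> j \<le> n \<Longrightarrow> sets (F i) \<subseteq> sets (F j)"
proof (induction j rule: dec_induct)
  case base then show ?case by simp
next
  case (step j) then show ?case using filt[of j] by auto
qed

lemma subalg2: "i \<le> j \<Longrightarrow> j \<le> n \<Longrightarrow> subalgebra (F j) (F i)"
  unfolding subalgebra_def using sets_mono subalg[of i] subalg[of j]
  by (auto simp: subalgebra_def)

lemma meas_up: "f \<in> borel_measurable (F i) \<Longrightarrow> i \<le> j \<Longrightarrow> j \<le> n \<Longrightarrow> f \<in> borel_measurable (F j)"
  using measurable_from_subalg[OF subalg2] by blast

lemma measM: "f \<in> borel_measurable (F i) \<Longrightarrow> i \<le> n \<Longrightarrow> f \<in> borel_measurable M"
  using measurable_from_subalg[OF subalg] by blast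

lemma sfs: "i \<le> n \<Longrightarrow> sigma_finite_subalgebra M (F i)"
  by (rule finite_measure_subalgebra_is_sigma_finite)
     (simp add: finite_measure_subalgebra_def finite_measure_subalgebra_axioms_def subalg finite_measure_axioms)

lemma xi_M: "i \<le> n \<Longrightarrow> \<xi> i \<in> borel_measurable M"
  using measM[OF meas] .

lemma q_meas: "i \<in> {1..n} \<Longrightarrow> q i \<in> borel_measurable (F (i - 1))"
  unfolding q_def CE_def by measurable

lemma r_meas: "i \<in> {1..n} \<Longrightarrow> r i \<in> borel_measurable (F (i - 1))"
  unfolding r_def CE_def by measurable

lemma eta_meas: "i \<le> n \<Longrightarrow> \<eta> i \<in> borel_measurable (F i)"
  unfolding \<eta>_def using meas[of i] by measurable

lemma Z_meas: "k \<le> n \<Longrightarrow> Z k \<in> borel_measurable (F k)"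
proof -
  assume k: "k \<le> n"
  have e: "\<And>i. i \<in> {1..k} \<Longrightarrow> \<eta> i \<in> borel_measurable (F k)"
  proof -
    fix i assume "i \<in> {1..k}"
    then show "\<eta> i \<in> borel_measurable (F k)" using k by (intro meas_up[OF eta_meas]) auto
  qed
  have qq: "\<And>i. i \<in> {1..k} \<Longrightarrow> q i \<in> borel_measurable (F k)"
    using q_meas meas_up k by (metis atLeastAtMost_iff diff_le_self le_trans)
  have rr: "\<And>i. i \<in> {1..k} \<Longrightarrow> r i \<in> borel_measurable (F k)"
    using r_meas meas_up k by (metis atLeastAtMost_iff diff_le_self le_trans)
  have "(\<lambda>\<omega>. \<Sum>i=1..k. \<eta> i \<omega>) \<in> borel_measurable (F k)"
    using e by (intro borel_measurable_sum) auto
  moreover have "(\<lambda>\<omega>. \<Sum>i=1..k. \<alpha> * q i \<omega> + \<beta> * r i \<omega>) \<in> borel_measurable (F k)"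
    using qq rr by (intro borel_measurable_sum) auto
  ultimately show ?thesis unfolding Z_def by measurable
qed

lemma Z_pos: "Z k \<omega> > 0" unfolding Z_def by simp

lemma Z_bound: "Z k \<omega> \<le> exp (l * (real k * y))"
proof -
  have "(\<Sum>i=1..k. \<eta> i \<omega>) \<le> (\<Sum>i=1..k. y)" unfolding \<eta>_def by (intro sum_mono) auto
  then have "l * (\<Sum>i=1..k. \<eta> i \<omega>) \<le> l * (real k * y)" using l by (simp add: mult_left_mono)
  moreover have "(\<Sum>i=1..k. \<alpha> * q i \<omega> + \<beta> * r i \<omega>) \<ge> 0"
    unfolding q_def r_def using \<alpha> \<beta> by (intro sum_nonneg) auto
  ultimately show ?thesis unfolding Z_def by simp
qed

lemma Z0: "Z 0 \<omega> = 1" unfolding Z_def by simp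

lemma Z_step: "k \<ge> 1 \<Longrightarrow> Z k \<omega> = Z (k - 1) \<omega> * exp (l * \<eta> k \<omega>) * exp (- (\<alpha> * q k \<omega> + \<beta> * r k \<omega>))"
proof -
  assume k: "k \<ge> 1"
  then obtain m where m: "k = Suc m" by (cases k) auto
  show ?thesis unfolding Z_def m by (simp add: exp_add[symmetric] exp_diff algebra_simps)
qed

end



context fn_setting begin

interpretation prob_space M by (rule prob)

lemma integrable_sq: "i \<in> {1..n} \<Longrightarrow> integrable M (\<lambda>\<omega>. (\<xi> i \<omega>)\<^sup>2)"
proof -
  assume i: "i \<in> {1..n}"
  have [measurable]: "\<xi> i \<in> borel_measurable M" using xi_M i by auto
  show ?thesis
  proof (rule Bochner_Integration.integrable_bound[where f="\<lambda>\<omega>. 1 + \<bar>\<xi> i \<omega>\<bar> powr p"])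
    show "integrable M (\<lambda>\<omega>. 1 + \<bar>\<xi> i \<omega>\<bar> powr p)" using intp[OF i] by simp
    show "(\<lambda>\<omega>. (\<xi> i \<omega>)\<^sup>2) \<in> borel_measurable M" by measurable
    show "AE \<omega> in M. norm ((\<xi> i \<omega>)\<^sup>2) \<le> norm (1 + \<bar>\<xi> i \<omega>\<bar> powr p)"
    proof (rule AE_I2)
      fix \<omega>
      let ?a = "\<bar>\<xi> i \<omega>\<bar>"
      have "?a\<^sup>2 \<le> 1 + ?a powr p"
      proof (cases "?a \<le> 1")
        case True
        then have "?a\<^sup>2 \<le> 1" by (simp add: abs_square_le_1)
        then show ?thesis by (smt (verit) powr_ge_zero)
      next
        case False
        then have "?a powr 2 \<le> ?a powr p" using p by (intro powr_mono) auto
        then show ?thesis using False by (simp add: powr_numeral)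
      qed
      then show "norm ((\<xi> i \<omega>)\<^sup>2) \<le> norm (1 + \<bar>\<xi> i \<omega>\<bar> powr p)" by simp
    qed
  qed
qed

lemma integrable_posp: "i \<in> {1..n} \<Longrightarrow> integrable M (\<lambda>\<omega>. (max (\<xi> i \<omega>) 0) powr p)"
proof -
  assume i: "i \<in> {1..n}"
  have [measurable]: "\<xi> i \<in> borel_measurable M" using xi_M i by auto
  show ?thesis
  proof (rule Bochner_Integration.integrable_bound[where f="\<lambda>\<omega>. \<bar>\<xi> i \<omega>\<bar> powr p"])
    show "integrable M (\<lambda>\<omega>. \<bar>\<xi> i \<omega>\<bar> powr p)" using intp[OF i] by simp
    show "(\<lambda>\<omega>. (max (\<xi> i \<omega>) 0) powr p) \<in> borel_measurable M" by measurable
    show "AE \<omega> in M. norm ((max (\<xi> i \<omega>) 0) powr p) \<le> norm (\<bar>\<xi> i \<omega>\<bar> powr p)"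
      by (rule AE_I2) (use p in \<open>auto intro!: powr_mono2\<close>)
  qed
qed

lemma integrable_eta: "i \<in> {1..n} \<Longrightarrow> integrable M (\<eta> i)"
proof -
  assume i: "i \<in> {1..n}"
  have [measurable]: "\<xi> i \<in> borel_measurable M" using xi_M i by auto
  show ?thesis
  proof (rule Bochner_Integration.integrable_bound[where f="\<lambda>\<omega>. \<bar>\<xi> i \<omega>\<bar> + y"])
    show "integrable M (\<lambda>\<omega>. \<bar>\<xi> i \<omega>\<bar> + y)" using int[OF i] by simp
    show "\<eta> i \<in> borel_measurable M" unfolding \<eta>_def by measurable
    show "AE \<omega> in M. norm (\<eta> i \<omega>) \<le> norm (\<bar>\<xi> i \<omega>\<bar> + y)"
      by (rule AE_I2) (use y in \<open>auto simp: \<eta>_def\<close>)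
  qed
qed

lemma supermart:
  assumes k: "k \<in> {1..n}" and A: "A \<in> sets (F (k - 1))"
  shows "(\<integral>\<omega>. indicator A \<omega> * Z k \<omega> \<partial>M) \<le> (\<integral>\<omega>. indicator A \<omega> * Z (k - 1) \<omega> \<partial>M)"
proof -
  define g where "g \<omega> = indicator A \<omega> * Z (k - 1) \<omega> * exp (- (\<alpha> * q k \<omega> + \<beta> * r k \<omega>))" for \<omega>
  define C where "C = exp (l * (real (k - 1) * y))"
  have kn: "k - 1 \<le> n" "k \<le> n" "1 \<le> k" using k by auto
  have [measurable]: "Z (k - 1) \<in> borel_measurable (F (k - 1))" using Z_meas kn by auto
  have [measurable]: "q k \<in> borel_measurable (F (k - 1))" using q_meas k by auto
  have [measurable]: "r k \<in> borel_measurable (F (k - 1))" using r_meas k by auto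
  have [measurable]: "A \<in> sets (F (k - 1))" using A .
  have gF[measurable]: "g \<in> borel_measurable (F (k - 1))" unfolding g_def by measurable
  have gM[measurable]: "g \<in> borel_measurable M" using measM[OF gF kn(1)] .
  have xiM[measurable]: "\<xi> k \<in> borel_measurable M" using xi_M kn by auto
  have g_nn: "g \<omega> \<ge> 0" for \<omega>
  proof -
    have "indicator A \<omega> * Z (k - 1) \<omega> \<ge> 0" using Z_pos[of "k - 1" \<omega>] by simp
    then show ?thesis unfolding g_def by simp
  qed
  have g_le: "g \<omega> \<le> indicator A \<omega> * Z (k - 1) \<omega>" for \<omega>
  proof -
    have "q k \<omega> \<ge> 0" "r k \<omega> \<ge> 0" unfolding q_def r_def by auto
    then have "\<alpha> * q k \<omega> + \<beta> * r k \<omega> \<ge> 0" using \<alpha> \<beta> by simp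
    then have "exp (- (\<alpha> * q k \<omega> + \<beta> * r k \<omega>)) \<le> 1" by simp
    moreover have "indicator A \<omega> * Z (k - 1) \<omega> \<ge> 0" using Z_pos[of "k - 1" \<omega>] by simp
    ultimately show ?thesis unfolding g_def by (simp add: mult_left_le)
  qed
  have g_bd: "\<bar>g \<omega>\<bar> \<le> C" for \<omega>
  proof -
    have "indicator A \<omega> * Z (k - 1) \<omega> \<le> Z (k - 1) \<omega>" using Z_pos[of "k - 1" \<omega>]
      by (simp add: indicator_def)
    then show ?thesis using g_le[of \<omega>] g_nn[of \<omega>] Z_bound[of "k - 1" \<omega>] unfolding C_def by linarith
  qed
  have i1: "integrable M (\<xi> k)" using int k by auto
  have i2: "integrable M (\<lambda>\<omega>. (\<xi> k \<omega>)\<^sup>2)" using integrable_sq k by auto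
  have i3: "integrable M (\<lambda>\<omega>. (max (\<xi> k \<omega>) 0) powr p)" using integrable_posp k by auto
  have i4: "integrable M (\<eta> k)" using integrable_eta k by auto
  have ig1: "integrable M (\<lambda>\<omega>. g \<omega> * \<xi> k \<omega>)" by (rule int_bmult[OF i1 gM g_bd])
  have ig2: "integrable M (\<lambda>\<omega>. g \<omega> * (\<xi> k \<omega>)\<^sup>2)" by (rule int_bmult[OF i2 gM g_bd])
  have ig3: "integrable M (\<lambda>\<omega>. g \<omega> * (max (\<xi> k \<omega>) 0) powr p)" by (rule int_bmult[OF i3 gM g_bd])
  have ig4: "integrable M (\<lambda>\<omega>. g \<omega> * \<eta> k \<omega>)" by (rule int_bmult[OF i4 gM g_bd])
  have ig0: "integrable M g" using int_bmult[OF integrable_const[of 1] gM g_bd] by simp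
  interpret S: sigma_finite_subalgebra M "F (k - 1)" using sfs kn by auto
  have iq: "integrable M (q k)" unfolding q_def CE_def
    using S.real_cond_exp_int(1)[OF i2] by (intro integrable_max) auto
  have ir: "integrable M (r k)" unfolding r_def CE_def
    using S.real_cond_exp_int(1)[OF i3] by (intro integrable_max) auto
  have igq: "integrable M (\<lambda>\<omega>. g \<omega> * q k \<omega>)" by (rule int_bmult[OF iq gM g_bd])
  have igr: "integrable M (\<lambda>\<omega>. g \<omega> * r k \<omega>)" by (rule int_bmult[OF ir gM g_bd])
  have E1: "(\<integral>\<omega>. g \<omega> * \<xi> k \<omega> \<partial>M) = 0"
  proof -
    have "(\<integral>\<omega>. g \<omega> * \<xi> k \<omega> \<partial>M) = (\<integral>\<omega>. g \<omega> * real_cond_exp M (F (k - 1)) (\<xi> k) \<omega> \<partial>M)"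
      using S.real_cond_exp_intg(2)[OF ig1 gF xiM] by simp
    also have "\<dots> = (\<integral>\<omega>. 0 \<partial>M)"
      using ce0[OF k] by (intro integral_cong_AE) auto
    finally show ?thesis by simp
  qed
  have E2: "(\<integral>\<omega>. g \<omega> * (\<xi> k \<omega>)\<^sup>2 \<partial>M) = (\<integral>\<omega>. g \<omega> * q k \<omega> \<partial>M)"
  proof -
    have m2[measurable]: "(\<lambda>\<omega>. (\<xi> k \<omega>)\<^sup>2) \<in> borel_measurable M" by measurable
    have "(\<integral>\<omega>. g \<omega> * (\<xi> k \<omega>)\<^sup>2 \<partial>M) = (\<integral>\<omega>. g \<omega> * real_cond_exp M (F (k - 1)) (\<lambda>\<omega>. (\<xi> k \<omega>)\<^sup>2) \<omega> \<partial>M)"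
      using S.real_cond_exp_intg(2)[OF ig2 gF m2] by simp
    also have "\<dots> = (\<integral>\<omega>. g \<omega> * q k \<omega> \<partial>M)"
    proof (rule integral_cong_AE)
      show "AE \<omega> in M. g \<omega> * real_cond_exp M (F (k - 1)) (\<lambda>\<omega>. (\<xi> k \<omega>)\<^sup>2) \<omega> = g \<omega> * q k \<omega>"
        using S.real_cond_exp_pos[of "\<lambda>\<omega>. (\<xi> k \<omega>)\<^sup>2"] unfolding q_def CE_def by auto
      show "(\<lambda>\<omega>. g \<omega> * q k \<omega>) \<in> borel_measurable M" using igq by auto
    qed measurable
    finally show ?thesis .
  qed
  have E3: "(\<integral>\<omega>. g \<omega> * (max (\<xi> k \<omega>) 0) powr p \<partial>M) = (\<integral>\<omega>. g \<omega> * r k \<omega> \<partial>M)"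
  proof -
    have m3[measurable]: "(\<lambda>\<omega>. (max (\<xi> k \<omega>) 0) powr p) \<in> borel_measurable M" by measurable
    have "(\<integral>\<omega>. g \<omega> * (max (\<xi> k \<omega>) 0) powr p \<partial>M) = (\<integral>\<omega>. g \<omega> * real_cond_exp M (F (k - 1)) (\<lambda>\<omega>. (max (\<xi> k \<omega>) 0) powr p) \<omega> \<partial>M)"
      using S.real_cond_exp_intg(2)[OF ig3 gF m3] by simp
    also have "\<dots> = (\<integral>\<omega>. g \<omega> * r k \<omega> \<partial>M)"
    proof (rule integral_cong_AE)
      show "AE \<omega> in M. g \<omega> * real_cond_exp M (F (k - 1)) (\<lambda>\<omega>. (max (\<xi> k \<omega>) 0) powr p) \<omega> = g \<omega> * r k \<omega>"
        using S.real_cond_exp_pos[of "\<lambda>\<omega>. (max (\<xi> k \<omega>) 0) powr p"] unfolding r_def CE_def by auto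
      show "(\<lambda>\<omega>. g \<omega> * r k \<omega>) \<in> borel_measurable M" using igr by auto
    qed measurable
    finally show ?thesis .
  qed
  have Zk_eq: "indicator A \<omega> * Z k \<omega> = g \<omega> * exp (l * \<eta> k \<omega>)" for \<omega>
    unfolding g_def using Z_step[OF kn(3), of \<omega>] by (simp add: algebra_simps)
  have pw: "indicator A \<omega> * Z k \<omega> \<le> g \<omega> + l * (g \<omega> * \<eta> k \<omega>) + \<alpha> * (g \<omega> * (\<xi> k \<omega>)\<^sup>2)
              + \<beta> * (g \<omega> * (max (\<xi> k \<omega>) 0) powr p)" for \<omega>
  proof -
    have et: "\<eta> k \<omega> \<le> y" unfolding \<eta>_def by simp
    have sq: "(\<eta> k \<omega>)\<^sup>2 \<le> (\<xi> k \<omega>)\<^sup>2"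
    proof (cases "\<xi> k \<omega> \<le> y")
      case True then show ?thesis unfolding \<eta>_def by simp
    next
      case False
      then have "\<eta> k \<omega> = y" unfolding \<eta>_def by simp
      then show ?thesis using False y by (simp add: power_mono)
    qed
    have pp: "(max (\<eta> k \<omega>) 0) powr p \<le> (max (\<xi> k \<omega>) 0) powr p"
      unfolding \<eta>_def using p by (intro powr_mono2) auto
    have "exp (l * \<eta> k \<omega>) \<le> 1 + l * \<eta> k \<omega> + \<alpha> * (\<eta> k \<omega>)\<^sup>2 + \<beta> * (max (\<eta> k \<omega>) 0) powr p"
      using PB[OF et] .
    also have "\<dots> \<le> 1 + l * \<eta> k \<omega> + \<alpha> * (\<xi> k \<omega>)\<^sup>2 + \<beta> * (max (\<xi> k \<omega>) 0) powr p"
      using sq pp \<alpha> \<beta> by (intro add_mono mult_left_mono order.refl) auto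
    finally have "g \<omega> * exp (l * \<eta> k \<omega>) \<le> g \<omega> * (1 + l * \<eta> k \<omega> + \<alpha> * (\<xi> k \<omega>)\<^sup>2 + \<beta> * (max (\<xi> k \<omega>) 0) powr p)"
      using g_nn by (intro mult_left_mono) auto
    then show ?thesis unfolding Zk_eq by (simp add: algebra_simps)
  qed
  have "(\<integral>\<omega>. indicator A \<omega> * Z k \<omega> \<partial>M) \<le> (\<integral>\<omega>. g \<omega> + l * (g \<omega> * \<eta> k \<omega>) + \<alpha> * (g \<omega> * (\<xi> k \<omega>)\<^sup>2)
              + \<beta> * (g \<omega> * (max (\<xi> k \<omega>) 0) powr p) \<partial>M)"
  proof (rule integral_mono)
    have [measurable]: "Z k \<in> borel_measurable M" using Z_meas[OF kn(2)] measM kn by auto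
    have [measurable]: "A \<in> sets M" using A subalg[OF kn(1)] by (auto simp: subalgebra_def)
    have nb: "norm (indicator A \<omega> * Z k \<omega>) \<le> exp (l * (real k * y))" for \<omega>
      using Z_pos[of "k" \<omega>] Z_bound[of "k" \<omega>] by (simp add: indicator_def)
    show "integrable M (\<lambda>\<omega>. indicator A \<omega> * Z k \<omega>)"
    proof (rule integrable_const_bound[where B="exp (l * (real k * y))"])
      show "AE \<omega> in M. norm (indicator A \<omega> * Z k \<omega>) \<le> exp (l * (real k * y))" using nb by (intro AE_I2)
    qed measurable
    show "integrable M (\<lambda>\<omega>. g \<omega> + l * (g \<omega> * \<eta> k \<omega>) + \<alpha> * (g \<omega> * (\<xi> k \<omega>)\<^sup>2)
              + \<beta> * (g \<omega> * (max (\<xi> k \<omega>) 0) powr p))"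
      using ig0 ig4 ig2 ig3 by auto
  qed (rule pw)
  also have "\<dots> = integral\<^sup>L M g + l * (\<integral>\<omega>. g \<omega> * \<eta> k \<omega> \<partial>M) + \<alpha> * (\<integral>\<omega>. g \<omega> * (\<xi> k \<omega>)\<^sup>2 \<partial>M)
              + \<beta> * (\<integral>\<omega>. g \<omega> * (max (\<xi> k \<omega>) 0) powr p \<partial>M)"
    using ig0 ig4 ig2 ig3 by simp
  also have "\<dots> \<le> integral\<^sup>L M g + \<alpha> * (\<integral>\<omega>. g \<omega> * q k \<omega> \<partial>M) + \<beta> * (\<integral>\<omega>. g \<omega> * r k \<omega> \<partial>M)"
  proof -
    have "(\<integral>\<omega>. g \<omega> * \<eta> k \<omega> \<partial>M) \<le> (\<integral>\<omega>. g \<omega> * \<xi> k \<omega> \<partial>M)"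
      using ig4 ig1 g_nn by (intro integral_mono) (auto simp: \<eta>_def intro!: mult_left_mono)
    then have "l * (\<integral>\<omega>. g \<omega> * \<eta> k \<omega> \<partial>M) \<le> 0" using E1 l by (simp add: mult_nonneg_nonpos)
    then show ?thesis unfolding E2 E3 by linarith
  qed
  also have "\<dots> = (\<integral>\<omega>. g \<omega> + \<alpha> * (g \<omega> * q k \<omega>) + \<beta> * (g \<omega> * r k \<omega>) \<partial>M)"
    using ig0 igq igr by simp
  also have "\<dots> \<le> (\<integral>\<omega>. indicator A \<omega> * Z (k - 1) \<omega> \<partial>M)"
  proof (rule integral_mono)
    have [measurable]: "Z (k - 1) \<in> borel_measurable M" using Z_meas[OF kn(1)] measM kn by auto
    have [measurable]: "A \<in> sets M" using A subalg[OF kn(1)] by (auto simp: subalgebra_def)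
    have nb: "norm (indicator A \<omega> * Z (k - 1) \<omega>) \<le> exp (l * (real (k - 1) * y))" for \<omega>
      using Z_pos[of "k - 1" \<omega>] Z_bound[of "k - 1" \<omega>] by (simp add: indicator_def)
    show "integrable M (\<lambda>\<omega>. indicator A \<omega> * Z (k - 1) \<omega>)"
    proof (rule integrable_const_bound[where B="exp (l * (real (k - 1) * y))"])
      show "AE \<omega> in M. norm (indicator A \<omega> * Z (k - 1) \<omega>) \<le> exp (l * (real (k - 1) * y))" using nb by (intro AE_I2)
    qed measurable
    show "integrable M (\<lambda>\<omega>. g \<omega> + \<alpha> * (g \<omega> * q k \<omega>) + \<beta> * (g \<omega> * r k \<omega>))"
      using ig0 igq igr by auto
    fix \<omega>
    have "1 + (\<alpha> * q k \<omega> + \<beta> * r k \<omega>) \<le> exp (\<alpha> * q k \<omega> + \<beta> * r k \<omega>)" by (rule exp_ge_add_one_self)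
    then have "g \<omega> * (1 + (\<alpha> * q k \<omega> + \<beta> * r k \<omega>)) \<le> g \<omega> * exp (\<alpha> * q k \<omega> + \<beta> * r k \<omega>)"
      using g_nn by (intro mult_left_mono) auto
    also have "g \<omega> * exp (\<alpha> * q k \<omega> + \<beta> * r k \<omega>) = indicator A \<omega> * Z (k - 1) \<omega>"
    proof -
      have "exp (- (\<alpha> * q k \<omega> + \<beta> * r k \<omega>)) * exp (\<alpha> * q k \<omega> + \<beta> * r k \<omega>) = 1"
        by (simp add: exp_add[symmetric])
      then show ?thesis unfolding g_def by (metis mult.assoc mult.right_neutral)
    qed
    finally show "g \<omega> + \<alpha> * (g \<omega> * q k \<omega>) + \<beta> * (g \<omega> * r k \<omega>) \<le> indicator A \<omega> * Z (k - 1) \<omega>"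
      by (simp add: algebra_simps)
  qed
  finally show ?thesis .
qed

end



context fn_setting begin

interpretation prob_space M by (rule prob)

definition H where "H c j = {\<omega> \<in> space M. \<forall>k\<in>{1..j}. Z k \<omega> < c}"

lemma H_sets: "j \<le> n \<Longrightarrow> H c j \<in> sets (F j)"
proof -
  assume j: "j \<le> n"
  have sp: "space (F j) = space M" using subalg[OF j] by (simp add: subalgebra_def)
  have "{\<omega> \<in> space (F j). \<forall>k\<in>{1..j}. Z k \<omega> < c} \<in> sets (F j)"
  proof (rule sets.sets_Collect_finite_All)
    fix k assume k: "k \<in> {1..j}"
    have [measurable]: "Z k \<in> borel_measurable (F j)" using k j by (intro meas_up[OF Z_meas]) auto
    show "{\<omega> \<in> space (F j). Z k \<omega> < c} \<in> sets (F j)" by measurable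
  qed auto
  then show ?thesis unfolding H_def sp .
qed

lemma H_setsM: "j \<le> n \<Longrightarrow> H c j \<in> sets M"
proof -
  assume j: "j \<le> n"
  have "H c j \<in> sets (F j)" using H_sets[OF j] .
  moreover have "sets (F j) \<subseteq> sets M" using subalg[OF j] by (simp add: subalgebra_def)
  ultimately show ?thesis by blast
qed

lemma intZ: "S \<in> sets M \<Longrightarrow> k \<le> n \<Longrightarrow> integrable M (\<lambda>\<omega>. indicator S \<omega> * Z k \<omega>)"
proof -
  assume S[measurable]: "S \<in> sets M" and k: "k \<le> n"
  have [measurable]: "Z k \<in> borel_measurable M" using Z_meas[OF k] measM k by auto
  have nb: "norm (indicator S \<omega> * Z k \<omega>) \<le> exp (l * (real k * y))" for \<omega>
    using Z_pos[of k \<omega>] Z_bound[of k \<omega>] by (simp add: indicator_def)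
  show ?thesis
  proof (rule integrable_const_bound[where B="exp (l * (real k * y))"])
    show "AE \<omega> in M. norm (indicator S \<omega> * Z k \<omega>) \<le> exp (l * (real k * y))" using nb by (intro AE_I2)
  qed measurable
qed

lemma maximal_step:
  assumes c: "c > 0"
  shows "j \<le> n \<Longrightarrow> c * measure M (space M - H c j) + (\<integral>\<omega>. indicator (H c j) \<omega> * Z j \<omega> \<partial>M) \<le> 1"
proof (induction j)
  case 0
  have "H c 0 = space M" unfolding H_def by auto
  moreover have "(\<integral>\<omega>. indicator (space M) \<omega> * Z 0 \<omega> \<partial>M) = 1"
  proof -
    have "(\<integral>\<omega>. indicator (space M) \<omega> * Z 0 \<omega> \<partial>M) = (\<integral>\<omega>. 1 \<partial>M)"
      by (intro Bochner_Integration.integral_cong) (auto simp: Z0)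
    then show ?thesis by (simp add: prob_space)
  qed
  ultimately show ?case by simp
next
  case (Suc j)
  have jn: "j \<le> n" "Suc j \<le> n" using Suc by auto
  define D where "D = {\<omega> \<in> H c j. Z (Suc j) \<omega> \<ge> c}"
  have HjM[measurable]: "H c j \<in> sets M" using H_setsM jn by auto
  have HSM[measurable]: "H c (Suc j) \<in> sets M" using H_setsM jn by auto
  have ZM[measurable]: "Z (Suc j) \<in> borel_measurable M" using Z_meas[OF jn(2)] measM jn by auto
  have DM[measurable]: "D \<in> sets M" unfolding D_def by measurable
  have HS: "H c (Suc j) = H c j - D"
  proof -
    have "{1..Suc j} = insert (Suc j) {1..j}" by auto
    then show ?thesis unfolding H_def D_def by (auto simp: not_le)
  qed
  have split1: "space M - H c (Suc j) = (space M - H c j) \<union> D"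
    unfolding HS D_def using H_def by auto
  have m1: "measure M (space M - H c (Suc j)) = measure M (space M - H c j) + measure M D"
    unfolding split1 by (rule finite_measure_Union) (auto simp: D_def)
  have cD: "c * measure M D \<le> (\<integral>\<omega>. indicator D \<omega> * Z (Suc j) \<omega> \<partial>M)"
  proof -
    have "c * measure M D = (\<integral>\<omega>. c * indicator D \<omega> \<partial>M)" by simp
    also have "\<dots> \<le> (\<integral>\<omega>. indicator D \<omega> * Z (Suc j) \<omega> \<partial>M)"
    proof (rule integral_mono)
      have "integrable M (indicator D :: 'a \<Rightarrow> real)" using DM emeasure_finite[of D] by (intro integrable_real_indicator) (auto simp: less_top[symmetric])
      then show "integrable M (\<lambda>\<omega>. c * indicator D \<omega>)" by simp
      show "integrable M (\<lambda>\<omega>. indicator D \<omega> * Z (Suc j) \<omega>)" using intZ[OF DM jn(2)] .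
    qed (auto simp: D_def indicator_def)
    finally show ?thesis .
  qed
  have isplit: "(\<integral>\<omega>. indicator (H c j) \<omega> * Z (Suc j) \<omega> \<partial>M)
      = (\<integral>\<omega>. indicator D \<omega> * Z (Suc j) \<omega> \<partial>M) + (\<integral>\<omega>. indicator (H c (Suc j)) \<omega> * Z (Suc j) \<omega> \<partial>M)"
  proof -
    have "(\<integral>\<omega>. indicator (H c j) \<omega> * Z (Suc j) \<omega> \<partial>M)
       = (\<integral>\<omega>. indicator D \<omega> * Z (Suc j) \<omega> + indicator (H c (Suc j)) \<omega> * Z (Suc j) \<omega> \<partial>M)"
      by (intro Bochner_Integration.integral_cong) (auto simp: HS D_def indicator_def)
    also have "\<dots> = (\<integral>\<omega>. indicator D \<omega> * Z (Suc j) \<omega> \<partial>M) + (\<integral>\<omega>. indicator (H c (Suc j)) \<omega> * Z (Suc j) \<omega> \<partial>M)"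
      using intZ[OF DM jn(2)] intZ[OF HSM jn(2)] by simp
    finally show ?thesis .
  qed
  have sm: "(\<integral>\<omega>. indicator (H c j) \<omega> * Z (Suc j) \<omega> \<partial>M) \<le> (\<integral>\<omega>. indicator (H c j) \<omega> * Z j \<omega> \<partial>M)"
    using supermart[of "Suc j" "H c j"] H_sets[OF jn(1)] jn by auto
  have m2: "c * measure M (space M - H c (Suc j)) = c * measure M (space M - H c j) + c * measure M D"
    using m1 by (simp add: distrib_left)
  show ?case using Suc.IH[OF jn(1)] m2 cD isplit sm by linarith
qed

lemma maximal:
  assumes c: "c > 0"
  shows "c * measure M {\<omega> \<in> space M. \<exists>k\<in>{1..n}. Z k \<omega> \<ge> c} \<le> 1"
proof -
  have eq: "{\<omega> \<in> space M. \<exists>k\<in>{1..n}. Z k \<omega> \<ge> c} = space M - H c n"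
    unfolding H_def by (auto simp: not_less)
  have "(\<integral>\<omega>. indicator (H c n) \<omega> * Z n \<omega> \<partial>M) \<ge> 0"
    using Z_pos by (intro Bochner_Integration.integral_nonneg) (simp add: less_imp_le)
  then show ?thesis using maximal_step[OF c, of n] eq by simp
qed

end

context fn_setting begin

interpretation prob_space M by (rule prob)

lemma final_bound:
  assumes n1: "n \<ge> 1" and x: "x > 0" and v: "v > 0" and w: "w > 0"
  shows "measure M {\<omega> \<in> space M. \<exists>k\<in>{1..n}. mart_sum \<xi> k \<omega> \<ge> x
              \<and> cond_qv M F \<xi> k \<omega> \<le> v \<and> cond_pos_moment M F p \<xi> k \<omega> \<le> w}
         \<le> exp (- l * x + \<alpha> * v + \<beta> * w) + measure M {\<omega> \<in> space M. (MAX i\<in>{1..n}. \<xi> i \<omega>) > y}"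
proof -
  define E where "E = {\<omega> \<in> space M. \<exists>k\<in>{1..n}. mart_sum \<xi> k \<omega> \<ge> x
              \<and> cond_qv M F \<xi> k \<omega> \<le> v \<and> cond_pos_moment M F p \<xi> k \<omega> \<le> w}"
  define c where "c = exp (l * x - \<alpha> * v - \<beta> * w)"
  have c: "c > 0" unfolding c_def by simp
  define G where "G = {\<omega> \<in> space M. (MAX i\<in>{1..n}. \<xi> i \<omega>) > y}"
  have G_eq: "G = (\<Union>i\<in>{1..n}. {\<omega> \<in> space M. \<xi> i \<omega> > y})"
    unfolding G_def using n1 by (auto simp: Max_gr_iff)
  have GM: "G \<in> sets M"
    unfolding G_eq
  proof (intro sets.finite_UN)
    fix i assume i: "i \<in> {1..n}"
    have [measurable]: "\<xi> i \<in> borel_measurable M" using xi_M i by auto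
    show "{\<omega> \<in> space M. \<xi> i \<omega> > y} \<in> sets M" by measurable
  qed auto
  have AEpos: "AE \<omega> in M. \<forall>i\<in>{1..n}. CE i (\<lambda>\<eta>. (\<xi> i \<eta>)\<^sup>2) \<omega> \<ge> 0
                 \<and> CE i (\<lambda>\<eta>. (max (\<xi> i \<eta>) 0) powr p) \<omega> \<ge> 0"
  proof (rule AE_finite_allI)
    fix i assume i: "i \<in> {1..n}"
    interpret S: sigma_finite_subalgebra M "F (i - 1)" using sfs i by auto
    have [measurable]: "\<xi> i \<in> borel_measurable M" using xi_M i by auto
    have "AE \<omega> in M. CE i (\<lambda>\<eta>. (\<xi> i \<eta>)\<^sup>2) \<omega> \<ge> 0"
      unfolding CE_def by (rule S.real_cond_exp_pos) auto
    moreover have "AE \<omega> in M. CE i (\<lambda>\<eta>. (max (\<xi> i \<eta>) 0) powr p) \<omega> \<ge> 0"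
      unfolding CE_def by (rule S.real_cond_exp_pos) auto
    ultimately show "AE \<omega> in M. CE i (\<lambda>\<eta>. (\<xi> i \<eta>)\<^sup>2) \<omega> \<ge> 0
                 \<and> CE i (\<lambda>\<eta>. (max (\<xi> i \<eta>) 0) powr p) \<omega> \<ge> 0" by eventually_elim auto
  qed simp
  obtain N where N: "\<And>\<omega>. \<omega> \<in> space M - N \<Longrightarrow> \<forall>i\<in>{1..n}. CE i (\<lambda>\<eta>. (\<xi> i \<eta>)\<^sup>2) \<omega> \<ge> 0
                 \<and> CE i (\<lambda>\<eta>. (max (\<xi> i \<eta>) 0) powr p) \<omega> \<ge> 0" and Nnull: "N \<in> null_sets M"
    using AE_E3[OF AEpos] by blast
  have NM: "N \<in> sets M" using Nnull by auto
  have HM: "H c n \<in> sets M" using H_setsM by auto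
  have sub: "E \<subseteq> (space M - H c n) \<union> N \<union> G"
  proof
    fix \<omega> assume \<omega>E: "\<omega> \<in> E"
    show "\<omega> \<in> (space M - H c n) \<union> N \<union> G"
    proof (cases "\<omega> \<in> N \<or> \<omega> \<in> G")
      case True then show ?thesis by auto
    next
      case False
      have sp: "\<omega> \<in> space M" using \<omega>E unfolding E_def by auto
      have pos: "\<forall>i\<in>{1..n}. CE i (\<lambda>\<eta>. (\<xi> i \<eta>)\<^sup>2) \<omega> \<ge> 0 \<and> CE i (\<lambda>\<eta>. (max (\<xi> i \<eta>) 0) powr p) \<omega> \<ge> 0"
        using N[of \<omega>] False sp by auto
      have le_y: "\<xi> i \<omega> \<le> y" if i: "i \<in> {1..n}" for i
      proof -
        have "\<not> y < (MAX i\<in>{1..n}. \<xi> i \<omega>)" using False sp unfolding G_def by auto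
        moreover have "\<xi> i \<omega> \<le> (MAX i\<in>{1..n}. \<xi> i \<omega>)" using i by (intro Max_ge) auto
        ultimately show ?thesis by linarith
      qed
      obtain k where k: "k \<in> {1..n}" "mart_sum \<xi> k \<omega> \<ge> x" "cond_qv M F \<xi> k \<omega> \<le> v"
        "cond_pos_moment M F p \<xi> k \<omega> \<le> w" using \<omega>E unfolding E_def by auto
      have s1: "(\<Sum>i=1..k. \<eta> i \<omega>) = mart_sum \<xi> k \<omega>"
        unfolding mart_sum_def \<eta>_def using k(1) le_y by (intro sum.cong) auto
      have s2: "(\<Sum>i=1..k. \<alpha> * q i \<omega> + \<beta> * r i \<omega>) = \<alpha> * cond_qv M F \<xi> k \<omega> + \<beta> * cond_pos_moment M F p \<xi> k \<omega>"
      proof -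
        have "(\<Sum>i=1..k. \<alpha> * q i \<omega> + \<beta> * r i \<omega>)
            = (\<Sum>i=1..k. \<alpha> * CE i (\<lambda>\<eta>. (\<xi> i \<eta>)\<^sup>2) \<omega> + \<beta> * CE i (\<lambda>\<eta>. (max (\<xi> i \<eta>) 0) powr p) \<omega>)"
          unfolding q_def r_def using k(1) pos by (intro sum.cong) auto
        also have "\<dots> = \<alpha> * cond_qv M F \<xi> k \<omega> + \<beta> * cond_pos_moment M F p \<xi> k \<omega>"
          unfolding cond_qv_def cond_pos_moment_def CE_def by (simp add: sum.distrib sum_distrib_left)
        finally show ?thesis .
      qed
      have "l * x - \<alpha> * v - \<beta> * w \<le> l * (\<Sum>i=1..k. \<eta> i \<omega>) - (\<Sum>i=1..k. \<alpha> * q i \<omega> + \<beta> * r i \<omega>)"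
      proof -
        have "l * x \<le> l * mart_sum \<xi> k \<omega>" using k(2) l by simp
        moreover have "\<alpha> * cond_qv M F \<xi> k \<omega> \<le> \<alpha> * v" using k(3) \<alpha> by (simp add: mult_left_mono)
        moreover have "\<beta> * cond_pos_moment M F p \<xi> k \<omega> \<le> \<beta> * w" using k(4) \<beta> by (simp add: mult_left_mono)
        ultimately show ?thesis unfolding s1 s2 by linarith
      qed
      then have "Z k \<omega> \<ge> c" unfolding Z_def c_def by simp
      then have "\<omega> \<notin> H c n" using k(1) unfolding H_def by (auto simp: not_less)
      then show ?thesis using sp by auto
    qed
  qed
  have "measure M E \<le> measure M ((space M - H c n) \<union> N \<union> G)"
    using sub HM NM GM by (intro finite_measure_mono) auto
  also have "\<dots> \<le> measure M ((space M - H c n) \<union> N) + measure M G"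
    using HM NM GM by (intro measure_Un_le) auto
  also have "\<dots> \<le> measure M (space M - H c n) + measure M N + measure M G"
    using HM NM by (simp add: measure_Un_le)
  also have "measure M N = 0" using Nnull by (simp add: measure_def null_setsD1)
  also have "measure M (space M - H c n) \<le> exp (- l * x + \<alpha> * v + \<beta> * w)"
  proof -
    have eq: "{\<omega> \<in> space M. \<exists>k\<in>{1..n}. Z k \<omega> \<ge> c} = space M - H c n"
      unfolding H_def by (auto simp: not_less)
    have "c * measure M (space M - H c n) \<le> 1" using maximal[OF c] eq by simp
    then have "measure M (space M - H c n) \<le> 1 / c" using c by (simp add: field_simps)
    also have "1 / c = exp (- (l * x - \<alpha> * v - \<beta> * w))"
    proof -
      have "exp (- (l * x - \<alpha> * v - \<beta> * w)) * c = 1" unfolding c_def by (simp add: exp_add[symmetric])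
      then show ?thesis using c by (simp add: field_simps)
    qed
    also have "- (l * x - \<alpha> * v - \<beta> * w) = - l * x + \<alpha> * v + \<beta> * w" by simp
    finally show ?thesis .
  qed
  finally show ?thesis unfolding E_def G_def by simp
qed

end

theorem theorem2p2:
  fixes M :: "'a measure" and F :: "nat \<Rightarrow> 'a measure" and \<xi> :: "nat \<Rightarrow> 'a \<Rightarrow> real"
    and n :: nat and p x y v w :: real
  assumes "prob_space M"
    and "n \<ge> 1"
    and "\<And>i. i \<le> n \<Longrightarrow> subalgebra M (F i)"
    and "sets (F 0) = {{}, space M}"
    and "\<And>i. i < n \<Longrightarrow> sets (F i) \<subseteq> sets (F (Suc i))"
    and "\<And>\<omega>. \<xi> 0 \<omega> = 0"
    and "\<And>i. i \<le> n \<Longrightarrow> \<xi> i \<in> borel_measurable (F i)"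
    and "\<And>i. i \<in> {1..n} \<Longrightarrow> integrable M (\<xi> i)"
    and "\<And>i. i \<in> {1..n} \<Longrightarrow> AE \<omega> in M. real_cond_exp M (F (i - 1)) (\<xi> i) \<omega> = 0"
    and "p \<ge> 2"
    and "\<And>i. i \<in> {1..n} \<Longrightarrow> integrable M (\<lambda>\<omega>. \<bar>\<xi> i \<omega>\<bar> powr p)"
    and "x > 0" and "y > 0" and "v > 0" and "w > 0"
  shows "measure M {\<omega> \<in> space M. \<exists>k\<in>{1..n}. mart_sum \<xi> k \<omega> \<ge> x
              \<and> cond_qv M F \<xi> k \<omega> \<le> v \<and> cond_pos_moment M F p \<xi> k \<omega> \<le> w}
         \<le> exp (- ((2 / (p + 2))\<^sup>2 * x\<^sup>2 / (2 * exp p * v)))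
           + exp (- ((1 - 2 / (p + 2)) * x / y) * ln (1 + (1 - 2 / (p + 2)) * x * y powr (p - 1) / w))
           + measure M {\<omega> \<in> space M. (MAX i\<in>{1..n}. \<xi> i \<omega>) > y}"
proof -
  note A = assms
  have y: "y > 0" using A by simp
  define X where "X = x / y"
  define V where "V = v / y\<^sup>2"
  define W where "W = w / y powr p"
  have X: "X > 0" "V > 0" "W > 0" using A unfolding X_def V_def W_def by auto
  obtain s where s: "s > 0" and sb: "exp (- s * X + s\<^sup>2 * V * exp p / 2 + min W V * (exp s - 1 - s))
     \<le> exp (- ((2 / (p + 2))\<^sup>2 * X\<^sup>2 / (2 * exp p * V)))
       + exp (- ((1 - 2 / (p + 2)) * X) * ln (1 + (1 - 2 / (p + 2)) * X / W))"
    using analytic[of p X V W] A(10) X by blast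
  define l where "l = s / y"
  have l: "l > 0" unfolding l_def using s y by simp
  have ly: "l * y = s" unfolding l_def using y by simp
  define B where "B = (exp (l * y) - 1 - l * y) / y powr p"
  have B: "B \<ge> 0"
  proof -
    have "exp (l * y) - 1 - l * y \<ge> 0" using exp_ge_add_one_self[of "l*y"] by linarith
    then show ?thesis unfolding B_def by simp
  qed
  define \<alpha>1 where "\<alpha>1 = l\<^sup>2 * exp p / 2"
  have \<alpha>1: "\<alpha>1 \<ge> 0" unfolding \<alpha>1_def by simp
  define Gm where "Gm = measure M {\<omega> \<in> space M. (MAX i\<in>{1..n}. \<xi> i \<omega>) > y}"
  define Ev where "Ev = measure M {\<omega> \<in> space M. \<exists>k\<in>{1..n}. mart_sum \<xi> k \<omega> \<ge> x
              \<and> cond_qv M F \<xi> k \<omega> \<le> v \<and> cond_pos_moment M F p \<xi> k \<omega> \<le> w}"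
  have PB1: "\<And>t. t \<le> y \<Longrightarrow> exp (l * t) \<le> 1 + l * t + \<alpha>1 * t\<^sup>2 + B * (max t 0) powr p"
    using PW1[OF y l _ A(10)] unfolding \<alpha>1_def B_def by auto
  have PB2: "\<And>t. t \<le> y \<Longrightarrow> exp (l * t) \<le> 1 + l * t + (\<alpha>1 + B * y powr (p - 2)) * t\<^sup>2 + 0 * (max t 0) powr p"
  proof -
    fix t assume t: "t \<le> y"
    have "B * (max t 0) powr p \<le> B * (y powr (p - 2) * t\<^sup>2)" using PW2[OF y t A(10)] B by (intro mult_left_mono)
    then show "exp (l * t) \<le> 1 + l * t + (\<alpha>1 + B * y powr (p - 2)) * t\<^sup>2 + 0 * (max t 0) powr p"
      using PB1[OF t] by (simp add: algebra_simps)
  qed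
  have loc1: "fn_setting M F \<xi> n p y l \<alpha>1 B"
    by (rule fn_setting.intro) (use A l \<alpha>1 B PB1 in auto)
  have loc2: "fn_setting M F \<xi> n p y l (\<alpha>1 + B * y powr (p - 2)) 0"
  proof (rule fn_setting.intro)
    show "\<And>t. t \<le> y \<Longrightarrow> exp (l * t) \<le> 1 + l * t + (\<alpha>1 + B * y powr (p - 2)) * t\<^sup>2 + 0 * (max t 0) powr p"
      by (rule PB2)
    show "0 \<le> \<alpha>1 + B * y powr (p - 2)" using \<alpha>1 B by simp
  qed (use A l in auto)
  have b1: "Ev \<le> exp (- l * x + \<alpha>1 * v + B * w) + Gm"
    unfolding Ev_def Gm_def using fn_setting.final_bound[OF loc1] A by auto
  have b2: "Ev \<le> exp (- l * x + (\<alpha>1 + B * y powr (p - 2)) * v + 0 * w) + Gm"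
    unfolding Ev_def Gm_def using fn_setting.final_bound[OF loc2] A by auto
  have e0: "exp s - 1 - s \<ge> 0" using exp_ge_add_one_self[of s] by linarith
  have yp: "y powr p > 0" using y by simp
  have Bw: "B * w = W * (exp s - 1 - s)" unfolding B_def W_def ly by simp
  have yv: "y powr (p - 2) * v = y powr p * V"
    unfolding V_def using y by (simp add: powr_diff powr_numeral)
  have Bv: "B * y powr (p - 2) * v = V * (exp s - 1 - s)"
    unfolding B_def ly using yv yp by (simp add: field_simps)
  have lx: "- l * x = - s * X" unfolding l_def X_def by simp
  have av: "\<alpha>1 * v = s\<^sup>2 * V * exp p / 2" unfolding \<alpha>1_def l_def V_def using y
    by (simp add: field_simps power2_eq_square)
  have Ev_bd: "Ev \<le> exp (- s * X + s\<^sup>2 * V * exp p / 2 + min W V * (exp s - 1 - s)) + Gm"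
  proof (cases "W \<le> V")
    case True
    then have mW: "min W V * (exp s - 1 - s) = W * (exp s - 1 - s)" by simp
    have eq: "- l * x + \<alpha>1 * v + B * w = - s * X + s\<^sup>2 * V * exp p / 2 + min W V * (exp s - 1 - s)"
      using lx av Bw mW by linarith
    from b1 show ?thesis by (simp only: eq)
  next
    case False
    then have "min W V * (exp s - 1 - s) = V * (exp s - 1 - s)" by simp
    moreover have "(\<alpha>1 + B * y powr (p - 2)) * v = \<alpha>1 * v + B * y powr (p - 2) * v" by (simp add: algebra_simps)
    ultimately have eq: "- l * x + (\<alpha>1 + B * y powr (p - 2)) * v + 0 * w = - s * X + s\<^sup>2 * V * exp p / 2 + min W V * (exp s - 1 - s)"
      using lx av Bv by linarith
    from b2 show ?thesis by (simp only: eq)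
  qed
  have T1: "X\<^sup>2 / V = x\<^sup>2 / v" unfolding X_def V_def using y by (simp add: field_simps power2_eq_square)
  have T1': "(2 / (p + 2))\<^sup>2 * X\<^sup>2 / (2 * exp p * V) = (2 / (p + 2))\<^sup>2 * x\<^sup>2 / (2 * exp p * v)"
    using T1 X by (simp add: field_simps)
  have T2: "X / W = x * y powr (p - 1) / w" unfolding X_def W_def using y
    by (simp add: powr_diff field_simps)
  have T2': "(1 - 2 / (p + 2)) * X / W = (1 - 2 / (p + 2)) * x * y powr (p - 1) / w"
    using T2 by (metis times_divide_eq_right mult.assoc)
  have T2'': "(1 - 2 / (p + 2)) * X = (1 - 2 / (p + 2)) * x / y" unfolding X_def by simp
  have sb2: "exp (- s * X + s\<^sup>2 * V * exp p / 2 + min W V * (exp s - 1 - s))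
     \<le> exp (- ((2 / (p + 2))\<^sup>2 * x\<^sup>2 / (2 * exp p * v)))
       + exp (- ((1 - 2 / (p + 2)) * x / y) * ln (1 + (1 - 2 / (p + 2)) * x * y powr (p - 1) / w))"
    using sb unfolding T1' T2' unfolding T2'' .
  show ?thesis using Ev_bd sb2 unfolding Ev_def Gm_def by linarith
qed

end
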